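(* Let $(M,d)$ be a complete geodesic space satisfying the non-expansive projection property $(NE)$: for all closed weakly convex sets $C\subset M$ and all $x,y\in M$, $d(x_C,y_C)\le d(x,y)$ whenever $x_C\in\pi_C(x)$ and $y_C\in\pi_C(y)$. Then $(M,d)$ satisfies the symmetric orthogonality property $(SO)$.
   Context: Geodesics are maps $\gamma:[0,1]\to M$ with $d(\gamma_t,\gamma_s)=|t-s|d(\gamma_0,\gamma_1)$. For geodesics with $p=\gamma_0=\eta_0$, $\gamma\perp_p\eta$ means $d(p,\gamma_t)\le d(\eta_s,\gamma_t)$ for all $s,t\in[0,1]$; $(SO)$ means $\gamma\perp_p\eta$ implies $\eta\perp_p\gamma$ for all such geodesics. $C$ is weakly convex if any two of its points are joined by some geodesic in $C$. $\pi_C(x)$ is the set of points of $C$ at distance $\inf_{z\in C}d(x,z)$ from $x$. *)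

theory Defs
  imports "HOL-Analysis.Analysis"
begin

definition geodesic :: "(real \<Rightarrow> 'a::metric_space) \<Rightarrow> bool" where
  "geodesic \<gamma> \<longleftrightarrow> (\<forall>t\<in>{0..1}. \<forall>s\<in>{0..1}.
      dist (\<gamma> t) (\<gamma> s) = \<bar>t - s\<bar> * dist (\<gamma> 0) (\<gamma> 1))"

definition geodesic_space :: "'a::metric_space itself \<Rightarrow> bool" where
  "geodesic_space _ \<longleftrightarrow> (\<forall>x y::'a. \<exists>\<gamma>. geodesic \<gamma> \<and> \<gamma> 0 = x \<and> \<gamma> 1 = y)"

definition orth :: "'a::metric_space \<Rightarrow> (real \<Rightarrow> 'a) \<Rightarrow> (real \<Rightarrow> 'a) \<Rightarrow> bool" where
  "orth p \<gamma> \<eta> \<longleftrightarrow> (\<forall>s\<in>{0..1}. \<forall>t\<in>{0..1}. dist p (\<gamma> t) \<le> dist (\<eta> s) (\<gamma> t))"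

definition SO :: "'a::metric_space itself \<Rightarrow> bool" where
  "SO _ \<longleftrightarrow> (\<forall>(p::'a) \<gamma> \<eta>. geodesic \<gamma> \<and> geodesic \<eta> \<and> \<gamma> 0 = p \<and> \<eta> 0 = p \<and> orth p \<gamma> \<eta>
      \<longrightarrow> orth p \<eta> \<gamma>)"

definition weakly_convex :: "'a::metric_space set \<Rightarrow> bool" where
  "weakly_convex C \<longleftrightarrow> (\<forall>x\<in>C. \<forall>y\<in>C. \<exists>\<gamma>. geodesic \<gamma> \<and> \<gamma> 0 = x \<and> \<gamma> 1 = y \<and> \<gamma> ` {0..1} \<subseteq> C)"

definition proj :: "'a::metric_space set \<Rightarrow> 'a \<Rightarrow> 'a set" where
  "proj C x = {z\<in>C. dist x z = (INF w\<in>C. dist x w)}"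

definition NE :: "'a::metric_space itself \<Rightarrow> bool" where
  "NE _ \<longleftrightarrow> (\<forall>C::'a set. closed C \<and> weakly_convex C \<longrightarrow>
      (\<forall>x y xC yC. xC \<in> proj C x \<and> yC \<in> proj C y \<longrightarrow> dist xC yC \<le> dist x y))"

end

theory Submission
  imports Defs
begin

lemma geodesic_cont:
  assumes g: "geodesic \<eta>"
  shows "continuous_on {0..1} \<eta>"
  unfolding continuous_on_iff
proof (intro ballI allI impI)
  fix x e :: real assume x: "x \<in> {0..1}" and e: "0 < e"
  define D where "D = dist (\<eta> 0) (\<eta> 1)"
  have D: "D \<ge> 0" unfolding D_def by simp
  show "\<exists>d>0. \<forall>x'\<in>{0..1}. dist x' x < d \<longrightarrow> dist (\<eta> x') (\<eta> x) < e"
  proof (intro exI[of _ "e/(D+1)"] conjI ballI impI)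
    show "0 < e/(D+1)" using e D by simp
    fix x' assume x': "x' \<in> {0..1}" and d: "dist x' x < e/(D+1)"
    have "dist (\<eta> x') (\<eta> x) = \<bar>x' - x\<bar> * D"
      using g x x' unfolding geodesic_def D_def by blast
    also have "\<dots> \<le> \<bar>x' - x\<bar> * (D+1)" using D by (simp add: mult_left_mono)
    also have "\<dots> < e/(D+1) * (D+1)"
      using d D by (intro mult_strict_right_mono) (auto simp: dist_real_def)
    also have "\<dots> = e" using D by simp
    finally show "dist (\<eta> x') (\<eta> x) < e" .
  qed
qed

lemma geodesic_image_wc:
  assumes g: "geodesic \<eta>"
  shows "weakly_convex (\<eta> ` {0..1})"
  unfolding weakly_convex_def
proof (intro ballI)
  fix x y assume "x \<in> \<eta> ` {0..1}" "y \<in> \<eta> ` {0..1}"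
  then obtain a b where a: "a \<in> {0..1}" "x = \<eta> a" and b: "b \<in> {0..1}" "y = \<eta> b" by auto
  define g' where "g' = (\<lambda>u. \<eta> (a + u * (b - a)))"
  have mem: "a + u * (b - a) \<in> {0..1}" if "u \<in> {0..1}" for u
  proof -
    have "a + u * (b - a) = (1 - u) * a + u * b" by (simp add: algebra_simps)
    moreover have "0 \<le> (1 - u) * a + u * b" using a b that by auto
    moreover have "(1 - u) * a + u * b \<le> (1 - u) * 1 + u * 1"
      using a b that by (intro add_mono mult_left_mono) auto
    ultimately show ?thesis by simp
  qed
  have "geodesic g'"
    unfolding geodesic_def
  proof (intro ballI)
    fix t s :: real assume t: "t \<in> {0..1}" and s: "s \<in> {0..1}"
    have "dist (g' t) (g' s) = \<bar>(a + t*(b-a)) - (a + s*(b-a))\<bar> * dist (\<eta> 0) (\<eta> 1)"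
      unfolding g'_def using g mem[OF t] mem[OF s] unfolding geodesic_def by blast
    also have "\<bar>(a + t*(b-a)) - (a + s*(b-a))\<bar> = \<bar>t - s\<bar> * \<bar>b - a\<bar>"
      by (simp add: algebra_simps abs_mult[symmetric])
    also have "dist (g' 0) (g' 1) = \<bar>a - b\<bar> * dist (\<eta> 0) (\<eta> 1)"
    proof -
      have "dist (\<eta> a) (\<eta> b) = \<bar>a - b\<bar> * dist (\<eta> 0) (\<eta> 1)"
        using g a(1) b(1) unfolding geodesic_def by blast
      then show ?thesis unfolding g'_def by simp
    qed
    ultimately show "dist (g' t) (g' s) = \<bar>t - s\<bar> * dist (g' 0) (g' 1)"
      by (metis abs_minus_commute mult.assoc)
  qed
  moreover have "g' ` {0..1} \<subseteq> \<eta> ` {0..1}" unfolding g'_def using mem by auto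
  ultimately show "\<exists>\<gamma>. geodesic \<gamma> \<and> \<gamma> 0 = x \<and> \<gamma> 1 = y \<and> \<gamma> ` {0..1} \<subseteq> \<eta> ` {0..1}"
    using a b unfolding g'_def by (intro exI[of _ g']) (simp add: g'_def)
qed

theorem proposition17:
  assumes "complete (UNIV :: 'a::metric_space set)"
    and "geodesic_space TYPE('a)"
    and "NE TYPE('a)"
  shows "SO TYPE('a)"
  unfolding SO_def
proof (intro allI impI)
  fix p :: 'a and \<gamma> \<eta>
  assume h: "geodesic \<gamma> \<and> geodesic \<eta> \<and> \<gamma> 0 = p \<and> \<eta> 0 = p \<and> orth p \<gamma> \<eta>"
  define C where "C = \<eta> ` {0..1}"
  have cl: "closed C" unfolding C_def
    using h geodesic_cont by (intro compact_imp_closed compact_continuous_image) auto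
  have wc: "weakly_convex C" unfolding C_def using h geodesic_image_wc by auto
  show "orth p \<eta> \<gamma>" unfolding orth_def
  proof (intro ballI)
    fix s t :: real assume s: "s \<in> {0..1}" and t: "t \<in> {0..1}"
    have pC: "p \<in> C" unfolding C_def using h by force
    have "p \<in> proj C (\<gamma> s)"
      unfolding proj_def
    proof (intro CollectI conjI pC)
      have "Inf ((\<lambda>w. dist (\<gamma> s) w) ` C) = dist (\<gamma> s) p"
      proof (rule cInf_eq_minimum)
        show "dist (\<gamma> s) p \<in> (\<lambda>w. dist (\<gamma> s) w) ` C" using pC by auto
        show "\<And>y. y \<in> (\<lambda>w. dist (\<gamma> s) w) ` C \<Longrightarrow> dist (\<gamma> s) p \<le> y"
        proof -
          fix y assume "y \<in> (\<lambda>w. dist (\<gamma> s) w) ` C"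
          then obtain r where r: "r \<in> {0..1}" "y = dist (\<gamma> s) (\<eta> r)" unfolding C_def by auto
          have "dist p (\<gamma> s) \<le> dist (\<eta> r) (\<gamma> s)"
            using h s r(1) unfolding orth_def by blast
          then show "dist (\<gamma> s) p \<le> y" using r(2) by (simp add: dist_commute)
        qed
      qed
      then show "dist (\<gamma> s) p = (INF w\<in>C. dist (\<gamma> s) w)" by simp
    qed
    moreover have eC: "\<eta> t \<in> C" unfolding C_def using t by auto
    have "\<eta> t \<in> proj C (\<eta> t)"
      unfolding proj_def
    proof (intro CollectI conjI eC)
      have "Inf ((\<lambda>w. dist (\<eta> t) w) ` C) = dist (\<eta> t) (\<eta> t)"
        by (rule cInf_eq_minimum) (use eC in auto)
      then show "dist (\<eta> t) (\<eta> t) = (INF w\<in>C. dist (\<eta> t) w)" by simp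
    qed
    ultimately have "dist p (\<eta> t) \<le> dist (\<gamma> s) (\<eta> t)"
      using assms(3) cl wc unfolding NE_def by blast
    then show "dist p (\<eta> t) \<le> dist (\<gamma> s) (\<eta> t)" .
  qed
qed

end
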